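(* For all graphs $F$ and $G$ with $F\to G$, \[ \mathsf{HDE}(F,G) \;\le\; \min_{q \in \mathcal Q(G)}\; \max_{\varphi \in \mathsf{Hom}(F,G)}\; \sum_{A\subseteq V_G} q(A)\cdot \mathsf{CC}\big(F|_{\varphi^{-1}(A)}\big). \]
   Context: Graphs are finite directed graphs $G=(V_G,E_G)$ with $V_G$ nonempty finite and $E_G\subseteq V_G\times V_G$ (loops allowed). A homomorphism $\varphi:F\to G$ is a map $V_F\to V_G$ with $(\varphi(a),\varphi(b))\in E_G$ for all $(a,b)\in E_F$; $\mathsf{Hom}(F,G)$ is the set of these, $\hom(F,G)$ its size, $F\to G$ means $\hom(F,G)\ge 1$. For $F\to G$, $\mathsf{HDE}(F,G)=\sup\{c\in\mathbb R:\hom(F,T)\ge\hom(G,T)^c\text{ for all graphs }T\}$. For $A\subseteq V_G$, $G|_A$ is the induced subgraph on $A$; $\mathsf{CC}(H)$ is the number of connected components of the underlying undirected graph of $H$ (edges ignoring direction), with $\mathsf{CC}(G|_\emptyset)=0$. $\mathcal Q(G)$ is the set of functions $q:\wp(V_G)\to\mathbb R$ with $q(\emptyset)=0$, $q(A)\ge0$ for all $A$, and $\sum_{A\subseteq V_G} q(A)\,\mathsf{CC}(G|_A)=1$. *)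

theory Defs
  imports Complex_Main "HOL-Library.FuncSet"
begin

text \<open>A directed graph is a pair (vertex set, edge set); loops allowed.\<close>
type_synonym 'a graph = "'a set \<times> ('a \<times> 'a) set"

abbreviation verts :: "'a graph \<Rightarrow> 'a set" where "verts G \<equiv> fst G"
abbreviation edges :: "'a graph \<Rightarrow> ('a \<times> 'a) set" where "edges G \<equiv> snd G"

definition wf_graph :: "'a graph \<Rightarrow> bool" where
  "wf_graph G \<longleftrightarrow> finite (verts G) \<and> verts G \<noteq> {} \<and> edges G \<subseteq> verts G \<times> verts G"

text \<open>Homomorphisms, as extensional maps V_F -> V_G (so distinct maps on V_F are counted once).\<close>
definition Homs :: "'a graph \<Rightarrow> 'b graph \<Rightarrow> ('a \<Rightarrow> 'b) set" where
  "Homs F G = {\<phi> \<in> verts F \<rightarrow>\<^sub>E verts G. \<forall>(a, b) \<in> edges F. (\<phi> a, \<phi> b) \<in> edges G}"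

definition hom :: "'a graph \<Rightarrow> 'b graph \<Rightarrow> nat" where
  "hom F G = card (Homs F G)"

text \<open>Homomorphism domination exponent; the target graphs T range over all finite
  graphs, represented (up to isomorphism) with vertices in nat.\<close>
definition HDE :: "'a graph \<Rightarrow> 'b graph \<Rightarrow> real" where
  "HDE F G = Sup {c :: real. \<forall>T :: nat graph. wf_graph T \<longrightarrow>
                     real (hom F T) \<ge> real (hom G T) powr c}"

definition induced :: "'a graph \<Rightarrow> 'a set \<Rightarrow> 'a graph" where
  "induced G A = (A, edges G \<inter> (A \<times> A))"

definition CC :: "'a graph \<Rightarrow> nat" where
  "CC H = card (verts H // ((edges H \<union> (edges H)\<inverse>)\<^sup>*))"

definition Qset :: "'a graph \<Rightarrow> ('a set \<Rightarrow> real) set" where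
  "Qset G = {q. q {} = 0 \<and> (\<forall>A \<in> Pow (verts G). q A \<ge> 0) \<and>
                (\<Sum>A \<in> Pow (verts G). q A * real (CC (induced G A))) = 1}"

end

theory Submission
  imports Defs
begin

definition relab :: "('c \<Rightarrow> 'd) \<Rightarrow> 'c graph \<Rightarrow> 'd graph" where
  "relab h T = (h ` verts T, map_prod h h ` edges T)"

lemma finite_Homs:
  assumes "wf_graph F" "wf_graph T" shows "finite (Homs F T)"
proof -
  have "Homs F T \<subseteq> verts F \<rightarrow>\<^sub>E verts T" unfolding Homs_def by auto
  moreover have "finite (verts F \<rightarrow>\<^sub>E verts T)" using assms by (simp add: wf_graph_def finite_PiE)
  ultimately show ?thesis by (rule finite_subset)
qed

lemma hom_relab:
  assumes wf: "wf_graph T" and inj: "inj_on h (verts T)" and wfX: "wf_graph X"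
  shows "hom X (relab h T) = hom X T"
proof -
  let ?g = "\<lambda>\<chi>. \<lambda>a\<in>verts X. h (\<chi> a)"
  have ET: "edges T \<subseteq> verts T \<times> verts T" using wf by (simp add: wf_graph_def)
  have EX: "edges X \<subseteq> verts X \<times> verts X" using wfX by (simp add: wf_graph_def)
  have inj2: "inj_on ?g (Homs X T)"
  proof (rule inj_onI)
    fix \<chi> \<chi>' assume a: "\<chi> \<in> Homs X T" "\<chi>' \<in> Homs X T" "?g \<chi> = ?g \<chi>'"
    show "\<chi> = \<chi>'"
    proof (rule extensionalityI)
      show "\<chi> \<in> extensional (verts X)" "\<chi>' \<in> extensional (verts X)"
        using a unfolding Homs_def by (auto simp: PiE_def)
      fix x assume x: "x \<in> verts X"
      have "h (\<chi> x) = h (\<chi>' x)" using a(3) x by (metis restrict_apply')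
      moreover have "\<chi> x \<in> verts T" "\<chi>' x \<in> verts T" using a x unfolding Homs_def by auto
      ultimately show "\<chi> x = \<chi>' x" using inj by (meson inj_onD)
    qed
  qed
  have img: "?g ` Homs X T = Homs X (relab h T)"
  proof
    show "?g ` Homs X T \<subseteq> Homs X (relab h T)"
    proof
      fix \<psi> assume "\<psi> \<in> ?g ` Homs X T"
      then obtain \<chi> where c: "\<chi> \<in> Homs X T" "\<psi> = ?g \<chi>" by auto
      show "\<psi> \<in> Homs X (relab h T)" unfolding Homs_def
      proof (intro CollectI conjI ballI)
        show "\<psi> \<in> verts X \<rightarrow>\<^sub>E verts (relab h T)" using c unfolding Homs_def relab_def by auto
        fix e assume e: "e \<in> edges X"
        obtain a b where ab: "e = (a,b)" by force
        have "a \<in> verts X" "b \<in> verts X" using e ab EX by auto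
        moreover have "(\<chi> a, \<chi> b) \<in> edges T" using c(1) e ab unfolding Homs_def by auto
        ultimately show "case e of (a, b) \<Rightarrow> (\<psi> a, \<psi> b) \<in> edges (relab h T)"
          using ab c(2) unfolding relab_def by force
      qed
    qed
  next
    show "Homs X (relab h T) \<subseteq> ?g ` Homs X T"
    proof
      fix \<psi> assume p: "\<psi> \<in> Homs X (relab h T)"
      let ?i = "inv_into (verts T) h"
      let ?\<chi> = "\<lambda>a\<in>verts X. ?i (\<psi> a)"
      have pv: "\<And>a. a \<in> verts X \<Longrightarrow> \<psi> a \<in> h ` verts T" using p unfolding Homs_def relab_def by auto
      have iv: "\<And>a. a \<in> verts X \<Longrightarrow> ?i (\<psi> a) \<in> verts T \<and> h (?i (\<psi> a)) = \<psi> a"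
        using pv by (meson f_inv_into_f inv_into_into)
      have "?\<chi> \<in> Homs X T"
        unfolding Homs_def
      proof (intro CollectI conjI ballI)
        show "?\<chi> \<in> verts X \<rightarrow>\<^sub>E verts T" using iv by auto
        fix e assume e: "e \<in> edges X"
        obtain a b where ab: "e = (a,b)" by force
        have abv: "a \<in> verts X" "b \<in> verts X" and pe: "(\<psi> a, \<psi> b) \<in> map_prod h h ` edges T"
          using p e ab EX unfolding Homs_def relab_def by auto
        then obtain u w where uw: "(u,w) \<in> edges T" "h u = \<psi> a" "h w = \<psi> b" by auto
        have "u \<in> verts T" "w \<in> verts T" using uw ET by auto
        then have "?i (\<psi> a) = u" "?i (\<psi> b) = w" using uw inj by (metis inv_into_f_f)+
        then show "case e of (a, b) \<Rightarrow> (?\<chi> a, ?\<chi> b) \<in> edges T"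
          using ab abv uw by simp
      qed
      moreover have "?g ?\<chi> = \<psi>"
      proof (rule extensionalityI)
        show "?g ?\<chi> \<in> extensional (verts X)" by simp
        show "\<psi> \<in> extensional (verts X)" using p unfolding Homs_def by (auto simp: PiE_def)
        fix x assume "x \<in> verts X" then show "?g ?\<chi> x = \<psi> x" using iv by simp
      qed
      ultimately show "\<psi> \<in> ?g ` Homs X T" by (metis image_eqI)
    qed
  qed
  show ?thesis unfolding hom_def using card_image[OF inj2] img by simp
qed

lemma rt_stays:
  assumes "(a,b) \<in> (E \<union> E\<inverse>)\<^sup>*" "E \<subseteq> P \<times> P" "a \<in> P" shows "b \<in> P"
  using assms(1) by (induction rule: rtrancl_induct) (use assms in auto)

lemma rt_const:
  assumes "(a,b) \<in> (E \<union> E\<inverse>)\<^sup>*" "\<And>x y. (x,y) \<in> E \<Longrightarrow> f x = f y" shows "f a = f b"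
  using assms(1) by (induction rule: rtrancl_induct) (use assms in auto)

lemma rt_class_eq:
  assumes "(a,b) \<in> (E \<union> E\<inverse>)\<^sup>*"
  shows "(E \<union> E\<inverse>)\<^sup>* `` {a} = (E \<union> E\<inverse>)\<^sup>* `` {b}"
proof -
  have "equiv UNIV ((E \<union> E\<inverse>)\<^sup>*)"
    unfolding equiv_def by (auto simp: refl_rtrancl sym_rtrancl sym_Un_converse trans_rtrancl)
  then show ?thesis using assms equiv_class_eq by metis
qed

abbreviation RR :: "'a graph \<Rightarrow> 'a set \<Rightarrow> ('a \<times> 'a) set" where
  "RR H A \<equiv> ((edges H \<inter> A \<times> A) \<union> (edges H \<inter> A \<times> A)\<inverse>)\<^sup>*"

lemma CC_induced: "CC (induced H A) = card (A // RR H A)"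
  by (simp add: CC_def induced_def)

lemma finite_quot: "finite A \<Longrightarrow> finite (A // R)"
  unfolding quotient_def by auto

definition bV :: "'b graph \<Rightarrow> ('b set \<Rightarrow> nat) \<Rightarrow> ('b \<times> ('b set \<Rightarrow> nat)) set" where
  "bV G n = (SIGMA v:verts G. PiE (Pow (verts G)) (\<lambda>A. if v \<in> A then {..<n A} else {0}))"

definition bE :: "'b graph \<Rightarrow> ('b set \<Rightarrow> nat) \<Rightarrow> (('b \<times> ('b set \<Rightarrow> nat)) \<times> ('b \<times> ('b set \<Rightarrow> nat))) set" where
  "bE G n = {((v,x),(w,y)). (v,x) \<in> bV G n \<and> (w,y) \<in> bV G n \<and> (v,w) \<in> edges G \<and>
      (\<forall>A. v \<in> A \<and> w \<in> A \<longrightarrow> x A = y A)}"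

definition blow :: "'b graph \<Rightarrow> ('b set \<Rightarrow> nat) \<Rightarrow> ('b \<times> ('b set \<Rightarrow> nat)) graph" where
  "blow G n = (bV G n, bE G n)"

lemma wf_blow:
  assumes wf: "wf_graph G" and npos: "\<And>A. n A > 0"
  shows "wf_graph (blow G n)"
proof -
  have fin: "finite (verts G)" and ne: "verts G \<noteq> {}" using wf by (auto simp: wf_graph_def)
  have "finite (bV G n)" unfolding bV_def
    by (intro finite_SigmaI fin finite_PiE) (auto simp: fin)
  moreover obtain v where v: "v \<in> verts G" using ne by auto
  have "(v, \<lambda>A\<in>Pow (verts G). 0) \<in> bV G n" unfolding bV_def using v npos by auto
  moreover have "bE G n \<subseteq> bV G n \<times> bV G n" unfolding bE_def by auto
  ultimately show ?thesis unfolding wf_graph_def blow_def by auto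
qed

lemma hom_blow_lower:
  assumes wf: "wf_graph G" and npos: "\<And>A. n A > 0"
  shows "(\<Prod>A\<in>Pow (verts G). n A ^ CC (induced G A)) \<le> hom G (blow G n)"
proof -
  let ?V = "verts G"
  define S where "S = PiE (Pow ?V) (\<lambda>B. PiE (B // RR G B) (\<lambda>_. {..<n B}))"
  define \<psi> where "\<psi> s = (\<lambda>v\<in>?V. (v, \<lambda>B\<in>Pow ?V. if v \<in> B then s B (RR G B `` {v}) else (0::nat)))" for s
  have fin: "finite ?V" using wf by (auto simp: wf_graph_def)
  have EG: "edges G \<subseteq> ?V \<times> ?V" using wf by (auto simp: wf_graph_def)
  have finq: "\<And>B. B \<in> Pow ?V \<Longrightarrow> finite (B // RR G B)"
  proof -
    fix B assume "B \<in> Pow ?V"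
    then have "finite B" using finite_subset[OF _ fin] by blast
    then show "finite (B // RR G B)" by (rule finite_quot)
  qed
  have inner: "\<And>B. B \<in> Pow ?V \<Longrightarrow> card (PiE (B // RR G B) (\<lambda>_. {..<n B})) = n B ^ CC (induced G B)"
    using finq by (simp add: card_PiE CC_induced)
  have cardS: "card S = (\<Prod>A\<in>Pow ?V. n A ^ CC (induced G A))"
    unfolding S_def using fin inner by (simp add: card_PiE)
  have hom: "\<psi> ` S \<subseteq> Homs G (blow G n)"
  proof
    fix h assume "h \<in> \<psi> ` S"
    then obtain s where s: "s \<in> S" "h = \<psi> s" by auto
    have inV: "\<And>v. v \<in> ?V \<Longrightarrow> h v \<in> bV G n"
    proof -
      fix v assume v: "v \<in> ?V"
      have "(\<lambda>B\<in>Pow ?V. if v \<in> B then s B (RR G B `` {v}) else 0)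
          \<in> PiE (Pow ?V) (\<lambda>A. if v \<in> A then {..<n A} else {0})"
      proof (rule PiE_I)
        fix B assume B: "B \<in> Pow ?V"
        show "(\<lambda>B\<in>Pow ?V. if v \<in> B then s B (RR G B `` {v}) else 0) B
            \<in> (if v \<in> B then {..<n B} else {0})"
        proof (cases "v \<in> B")
          case True
          then have "RR G B `` {v} \<in> B // RR G B" by (rule quotientI)
          then have "s B (RR G B `` {v}) \<in> {..<n B}" using s(1) B unfolding S_def by auto
          then show ?thesis using True B by simp
        qed (use B in simp)
      qed simp
      then show "h v \<in> bV G n" using s v unfolding \<psi>_def bV_def by simp
    qed
    show "h \<in> Homs G (blow G n)" unfolding Homs_def
    proof (intro CollectI conjI ballI)
      show "h \<in> ?V \<rightarrow>\<^sub>E verts (blow G n)" using inV s unfolding blow_def \<psi>_def by auto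
      fix e assume e: "e \<in> edges G"
      obtain v w where vw: "e = (v,w)" by force
      have v: "v \<in> ?V" and w: "w \<in> ?V" using e vw EG by auto
      have agree: "\<forall>A. v \<in> A \<and> w \<in> A \<longrightarrow> snd (h v) A = snd (h w) A"
      proof (intro allI impI)
        fix A assume A: "v \<in> A \<and> w \<in> A"
        show "snd (h v) A = snd (h w) A"
        proof (cases "A \<in> Pow ?V")
          case True
          have "(v,w) \<in> (edges G \<inter> A \<times> A) \<union> (edges G \<inter> A \<times> A)\<inverse>" using e vw A by blast
          then have "(v,w) \<in> RR G A" by (rule r_into_rtrancl)
          then have "RR G A `` {v} = RR G A `` {w}" by (rule rt_class_eq)
          then show ?thesis using True A v w s(2) unfolding \<psi>_def by simp
        next
          case False
          then show ?thesis using v w s(2) unfolding \<psi>_def by simp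
        qed
      qed
      obtain x where x: "h v = (v, x)" using v s(2) unfolding \<psi>_def by simp
      obtain y where y: "h w = (w, y)" using w s(2) unfolding \<psi>_def by simp
      have "(h v, h w) \<in> bE G n" unfolding bE_def x y
        using inV[OF v] inV[OF w] e vw agree x y by simp
      then show "case e of (a, b) \<Rightarrow> (h a, h b) \<in> edges (blow G n)" using vw unfolding blow_def by simp
    qed
  qed
  have inj: "inj_on \<psi> S"
  proof (rule inj_onI)
    fix s s' assume ss: "s \<in> S" "s' \<in> S" "\<psi> s = \<psi> s'"
    show "s = s'"
    proof (rule ccontr)
      assume "s \<noteq> s'"
      have "\<exists>B\<in>Pow ?V. s B \<noteq> s' B"
      proof (rule ccontr)
        assume "\<not> (\<exists>B\<in>Pow ?V. s B \<noteq> s' B)"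
        then have "s = s'" using PiE_ext[of s "Pow ?V" _ s'] ss(1,2) unfolding S_def by blast
        then show False using \<open>s \<noteq> s'\<close> by simp
      qed
      then obtain B where B: "B \<in> Pow ?V" "s B \<noteq> s' B" by blast
      have m1: "s B \<in> PiE (B // RR G B) (\<lambda>_. {..<n B})" using ss(1) B unfolding S_def by blast
      have m2: "s' B \<in> PiE (B // RR G B) (\<lambda>_. {..<n B})" using ss(2) B unfolding S_def by blast
      have "\<exists>K\<in>B // RR G B. s B K \<noteq> s' B K"
      proof (rule ccontr)
        assume "\<not> (\<exists>K\<in>B // RR G B. s B K \<noteq> s' B K)"
        then have "s B = s' B" using PiE_ext[OF m1 m2] by blast
        then show False using B by simp
      qed
      then obtain K where K: "K \<in> B // RR G B" "s B K \<noteq> s' B K" by blast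
      then obtain v where v: "v \<in> B" "K = RR G B `` {v}" by (auto elim: quotientE)
      have vV: "v \<in> ?V" using v B by auto
      have "\<psi> s v = \<psi> s' v" using ss(3) by simp
      then have "snd (\<psi> s v) B = snd (\<psi> s' v) B" by simp
      then have "s B K = s' B K" using vV v B unfolding \<psi>_def by simp
      then show False using K by simp
    qed
  qed
  have "card S = card (\<psi> ` S)" using card_image[OF inj] by simp
  also have "\<dots> \<le> hom G (blow G n)" unfolding hom_def
    by (rule card_mono[OF finite_Homs[OF wf wf_blow[OF wf npos]] hom])
  finally show ?thesis using cardS by simp
qed

lemma bE_D:
  assumes "(p, p') \<in> bE G n"
  shows "(fst p, fst p') \<in> edges G" "\<forall>A. fst p \<in> A \<and> fst p' \<in> A \<longrightarrow> snd p A = snd p' A"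
  using assms by (cases p; cases p'; simp add: bE_def)+

lemma bV_D:
  assumes "p \<in> bV G n"
  shows "fst p \<in> verts G" "snd p \<in> PiE (Pow (verts G)) (\<lambda>A. if fst p \<in> A then {..<n A} else {0})"
  using assms by (cases p; simp add: bV_def)+

lemma hom_blow_upper:
  assumes wfF: "wf_graph F" and wfG: "wf_graph G" and npos: "\<And>A. n A > 0"
  shows "hom F (blow G n) \<le> (\<Sum>\<phi>\<in>Homs F G. \<Prod>B\<in>Pow (verts G). n B ^ CC (induced F {v \<in> verts F. \<phi> v \<in> B}))"
proof -
  let ?V = "verts G" and ?T = "blow G n"
  define P where "P \<phi> B = {v \<in> verts F. \<phi> v \<in> B}" for \<phi> :: "'a \<Rightarrow> 'b" and B
  define Y where "Y \<phi> = {\<chi> \<in> Homs F ?T. \<forall>a\<in>verts F. fst (\<chi> a) = \<phi> a}" for \<phi>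
  define S where "S \<phi> = PiE (Pow ?V) (\<lambda>B. PiE (P \<phi> B // RR F (P \<phi> B)) (\<lambda>_. {..<n B}))" for \<phi>
  define g where "g \<phi> s = (\<lambda>a\<in>verts F. (\<phi> a, \<lambda>B\<in>Pow ?V. if \<phi> a \<in> B then s B (RR F (P \<phi> B) `` {a}) else (0::nat)))" for \<phi> s
  have finF: "finite (verts F)" and EF: "edges F \<subseteq> verts F \<times> verts F" using wfF by (auto simp: wf_graph_def)
  have finG: "finite ?V" using wfG by (auto simp: wf_graph_def)
  have finq: "\<And>\<phi> B. finite (P \<phi> B // RR F (P \<phi> B))"
    using finF by (intro finite_quot) (simp add: P_def)
  have finS: "\<And>\<phi>. finite (S \<phi>)" unfolding S_def using finG finq by (intro finite_PiE) auto
  have cardS: "\<And>\<phi>. card (S \<phi>) = (\<Prod>B\<in>Pow ?V. n B ^ CC (induced F (P \<phi> B)))"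
    unfolding S_def using finG finq by (simp add: card_PiE CC_induced)
  have Hom_v: "\<chi> a \<in> bV G n" if "\<chi> \<in> Homs F ?T" "a \<in> verts F" for \<chi> a
  proof -
    have "\<chi> \<in> verts F \<rightarrow>\<^sub>E verts ?T" using that(1) unfolding Homs_def by blast
    then have "\<chi> a \<in> verts ?T" using that(2) by (rule PiE_mem)
    then show ?thesis unfolding blow_def by simp
  qed
  have Hom_e: "(\<chi> a, \<chi> b) \<in> bE G n" if "\<chi> \<in> Homs F ?T" "(a,b) \<in> edges F" for \<chi> a b
  proof -
    have "\<forall>(a, b)\<in>edges F. (\<chi> a, \<chi> b) \<in> edges ?T" using that(1) unfolding Homs_def by blast
    then have "(\<chi> a, \<chi> b) \<in> edges ?T" using that(2) by blast
    then show ?thesis unfolding blow_def by simp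
  qed
  have cover: "Homs F ?T \<subseteq> (\<Union>\<phi>\<in>Homs F G. Y \<phi>)"
  proof
    fix \<chi> assume c: "\<chi> \<in> Homs F ?T"
    define \<phi> where "\<phi> = (\<lambda>a\<in>verts F. fst (\<chi> a))"
    have fstv: "fst (\<chi> a) \<in> ?V" if "a \<in> verts F" for a
      using Hom_v[OF c that] by (rule bV_D)
    have "\<phi> \<in> Homs F G" unfolding Homs_def
    proof (intro CollectI conjI ballI)
      show "\<phi> \<in> verts F \<rightarrow>\<^sub>E ?V" using fstv unfolding \<phi>_def by (simp add: PiE_iff)
      fix e assume e: "e \<in> edges F"
      obtain a b where ab: "e = (a,b)" by force
      have ab': "a \<in> verts F" "b \<in> verts F" using e ab EF by auto
      have "(\<chi> a, \<chi> b) \<in> bE G n" using Hom_e[OF c] e ab by simp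
      then have "(fst (\<chi> a), fst (\<chi> b)) \<in> edges G" by (rule bE_D)
      then show "case e of (a, b) \<Rightarrow> (\<phi> a, \<phi> b) \<in> edges G" using ab ab' unfolding \<phi>_def by simp
    qed
    moreover have "\<chi> \<in> Y \<phi>" using c unfolding Y_def \<phi>_def by simp
    ultimately show "\<chi> \<in> (\<Union>\<phi>\<in>Homs F G. Y \<phi>)" by blast
  qed
  have Ysub: "Y \<phi> \<subseteq> g \<phi> ` S \<phi>" for \<phi>
  proof
    fix \<chi> assume c: "\<chi> \<in> Y \<phi>"
    have cH: "\<chi> \<in> Homs F ?T" and cf: "\<And>a. a \<in> verts F \<Longrightarrow> fst (\<chi> a) = \<phi> a" using c unfolding Y_def by auto
    have cv: "\<And>a. a \<in> verts F \<Longrightarrow> \<chi> a \<in> bV G n" using Hom_v[OF cH] by blast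
    have csnd: "\<And>a. a \<in> verts F \<Longrightarrow> snd (\<chi> a) \<in> PiE (Pow ?V) (\<lambda>A. if \<phi> a \<in> A then {..<n A} else {0})"
      using bV_D(2)[OF cv] cf by metis
    have cedge: "\<And>a b. (a,b) \<in> edges F \<Longrightarrow> (\<chi> a, \<chi> b) \<in> bE G n"
      using Hom_e[OF cH] by blast
    have const: "snd (\<chi> a) B = snd (\<chi> a') B" if aa: "(a,a') \<in> RR F (P \<phi> B)" for a a' B
    proof (rule rt_const[OF aa, where f = "\<lambda>a. snd (\<chi> a) B"])
      fix x y assume xy: "(x,y) \<in> edges F \<inter> P \<phi> B \<times> P \<phi> B"
      then have xyv: "x \<in> verts F" "y \<in> verts F" "\<phi> x \<in> B" "\<phi> y \<in> B" unfolding P_def by auto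
      have "(\<chi> x, \<chi> y) \<in> bE G n" using xy cedge by blast
      then have "\<forall>A. fst (\<chi> x) \<in> A \<and> fst (\<chi> y) \<in> A \<longrightarrow> snd (\<chi> x) A = snd (\<chi> y) A"
        by (rule bE_D)
      then show "snd (\<chi> x) B = snd (\<chi> y) B" using xyv cf by simp
    qed
    define s where "s = (\<lambda>B\<in>Pow ?V. \<lambda>K\<in>P \<phi> B // RR F (P \<phi> B). snd (\<chi> (SOME a. a \<in> K)) B)"
    have someK: "(SOME a'. a' \<in> RR F (P \<phi> B) `` {a}) \<in> RR F (P \<phi> B) `` {a}" for a B
      by (rule someI[of _ a]) simp
    have sS: "s \<in> S \<phi>" unfolding S_def
    proof (rule PiE_I)
      fix B assume B: "B \<in> Pow ?V"
      show "s B \<in> PiE (P \<phi> B // RR F (P \<phi> B)) (\<lambda>_. {..<n B})"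
      proof (rule PiE_I)
        fix K assume K: "K \<in> P \<phi> B // RR F (P \<phi> B)"
        then obtain a where a: "a \<in> P \<phi> B" "K = RR F (P \<phi> B) `` {a}" by (auto elim: quotientE)
        let ?a = "SOME a'. a' \<in> K"
        have "?a \<in> K" using someK a by simp
        then have "(a, ?a) \<in> RR F (P \<phi> B)" using a by simp
        then have "?a \<in> P \<phi> B" by (rule rt_stays) (use a in auto)
        then have av: "?a \<in> verts F" "\<phi> ?a \<in> B" unfolding P_def by auto
        have "snd (\<chi> ?a) B \<in> (if \<phi> ?a \<in> B then {..<n B} else {0})" using PiE_mem[OF csnd[OF av(1)] B] .
        then have "snd (\<chi> ?a) B \<in> {..<n B}" using av(2) by simp
        then show "s B K \<in> {..<n B}" unfolding s_def using B K by simp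
      next
        fix K assume "K \<notin> P \<phi> B // RR F (P \<phi> B)"
        then show "s B K = undefined" unfolding s_def using B by simp
      qed
    next
      fix B assume "B \<notin> Pow ?V" then show "s B = undefined" unfolding s_def by simp
    qed
    have "g \<phi> s = \<chi>"
    proof (rule extensionalityI)
      show "g \<phi> s \<in> extensional (verts F)" unfolding g_def by simp
      show "\<chi> \<in> extensional (verts F)" using cH unfolding Homs_def by (auto simp: PiE_def)
      fix a assume a: "a \<in> verts F"
      have "(\<lambda>B\<in>Pow ?V. if \<phi> a \<in> B then s B (RR F (P \<phi> B) `` {a}) else 0) = snd (\<chi> a)"
      proof (rule extensionalityI)
        show "snd (\<chi> a) \<in> extensional (Pow ?V)" using csnd[OF a] by (auto simp: PiE_def)
        fix B assume B: "B \<in> Pow ?V"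
        show "(\<lambda>B\<in>Pow ?V. if \<phi> a \<in> B then s B (RR F (P \<phi> B) `` {a}) else 0) B = snd (\<chi> a) B"
        proof (cases "\<phi> a \<in> B")
          case True
          then have aP: "a \<in> P \<phi> B" using a unfolding P_def by simp
          then have Kq: "RR F (P \<phi> B) `` {a} \<in> P \<phi> B // RR F (P \<phi> B)" by (rule quotientI)
          let ?a = "SOME a'. a' \<in> RR F (P \<phi> B) `` {a}"
          have "(a, ?a) \<in> RR F (P \<phi> B)" using someK[of B a] by simp
          then have "snd (\<chi> a) B = snd (\<chi> ?a) B" by (rule const)
          then show ?thesis using True B Kq unfolding s_def by simp
        next
          case False
          have "snd (\<chi> a) B \<in> (if \<phi> a \<in> B then {..<n B} else {0})" using PiE_mem[OF csnd[OF a] B] .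
          then show ?thesis using False B by simp
        qed
      qed simp
      then show "g \<phi> s a = \<chi> a" using a cf[OF a] unfolding g_def by (cases "\<chi> a") simp
    qed
    then show "\<chi> \<in> g \<phi> ` S \<phi>" using sS by (metis image_eqI)
  qed
  have finH: "finite (Homs F G)" by (rule finite_Homs[OF wfF wfG])
  have "hom F ?T \<le> card (\<Union>\<phi>\<in>Homs F G. Y \<phi>)" unfolding hom_def
  proof (rule card_mono[OF _ cover])
    show "finite (\<Union>\<phi>\<in>Homs F G. Y \<phi>)"
      by (rule finite_UN_I[OF finH]) (rule finite_subset[OF Ysub finite_imageI[OF finS]])
  qed
  also have "\<dots> \<le> (\<Sum>\<phi>\<in>Homs F G. card (Y \<phi>))" by (rule card_UN_le[OF finH])
  also have "\<dots> \<le> (\<Sum>\<phi>\<in>Homs F G. card (S \<phi>))"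
  proof (rule sum_mono)
    fix \<phi> show "card (Y \<phi>) \<le> card (S \<phi>)"
      using card_mono[OF finite_imageI[OF finS] Ysub[of \<phi>]] card_image_le[OF finS, of "g \<phi>" \<phi>] by linarith
  qed
  finally show ?thesis using cardS unfolding P_def by simp
qed

lemma wf_relab:
  assumes "wf_graph T" shows "wf_graph (relab h T)"
  using assms unfolding wf_graph_def relab_def by (auto simp: map_prod_def)

lemma hom_pos_iff:
  assumes "wf_graph F" "wf_graph T" shows "hom F T \<ge> 1 \<longleftrightarrow> Homs F T \<noteq> {}"
proof -
  have "finite (Homs F T)" using finite_Homs assms by blast
  then have "card (Homs F T) > 0 \<longleftrightarrow> Homs F T \<noteq> {}" by (simp add: card_gt_0_iff)
  then show ?thesis unfolding hom_def by linarith
qed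

lemma hom_comp_pos:
  assumes wfF: "wf_graph F" and wfG: "wf_graph G" and wfT: "wf_graph T"
    and "hom F G \<ge> 1" "hom G T \<ge> 1"
  shows "hom F T \<ge> 1"
proof -
  obtain \<phi> where p: "\<phi> \<in> Homs F G" using assms hom_pos_iff by blast
  obtain \<psi> where q: "\<psi> \<in> Homs G T" using assms hom_pos_iff by blast
  have "(\<lambda>a\<in>verts F. \<psi> (\<phi> a)) \<in> Homs F T"
  proof -
    have EF: "edges F \<subseteq> verts F \<times> verts F" using wfF by (simp add: wf_graph_def)
    have pv: "\<And>a. a \<in> verts F \<Longrightarrow> \<phi> a \<in> verts G" using p unfolding Homs_def by auto
    have qv: "\<And>a. a \<in> verts G \<Longrightarrow> \<psi> a \<in> verts T" using q unfolding Homs_def by auto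
    have pe: "\<And>a b. (a,b) \<in> edges F \<Longrightarrow> (\<phi> a, \<phi> b) \<in> edges G" using p unfolding Homs_def by auto
    have qe: "\<And>a b. (a,b) \<in> edges G \<Longrightarrow> (\<psi> a, \<psi> b) \<in> edges T" using q unfolding Homs_def by auto
    show ?thesis unfolding Homs_def
    proof (intro CollectI conjI ballI)
      show "(\<lambda>a\<in>verts F. \<psi> (\<phi> a)) \<in> verts F \<rightarrow>\<^sub>E verts T" using pv qv by auto
      fix e assume e: "e \<in> edges F"
      obtain a b where ab: "e = (a,b)" by force
      have "a \<in> verts F" "b \<in> verts F" using e ab EF by auto
      then show "case e of (a, b) \<Rightarrow> ((\<lambda>a\<in>verts F. \<psi> (\<phi> a)) a, (\<lambda>a\<in>verts F. \<psi> (\<phi> a)) b) \<in> edges T"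
        using ab e pe qe by simp
    qed
  qed
  then show ?thesis using hom_pos_iff[OF wfF wfT] by blast
qed

lemma Qset_ne:
  assumes wf: "wf_graph G" shows "Qset G \<noteq> {}"
proof -
  obtain v where v: "v \<in> verts G" using wf unfolding wf_graph_def by auto
  define q where "q = (\<lambda>A::'a set. if A = {v} then (1::real) else 0)"
  have cc: "CC (induced G {v}) = 1" by (simp add: CC_induced quotient_def)
  have "(\<Sum>A\<in>Pow (verts G). q A * real (CC (induced G A))) = (\<Sum>A\<in>Pow (verts G). if A = {v} then real (CC (induced G A)) else 0)"
    unfolding q_def by (intro sum.cong) auto
  also have "\<dots> = 1" using v wf cc by (simp add: wf_graph_def)
  finally have "q \<in> Qset G" unfolding Qset_def q_def by auto
  then show ?thesis by blast
qed

lemma nat_floor_bounds: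
  assumes "x \<ge> (0::real)" shows "real (nat \<lfloor>x\<rfloor>) \<le> x" "real (nat \<lfloor>x\<rfloor>) \<ge> x - 1"
proof -
  have "real (nat \<lfloor>x\<rfloor>) = real_of_int \<lfloor>x\<rfloor>" using assms by simp
  then show "real (nat \<lfloor>x\<rfloor>) \<le> x" "real (nat \<lfloor>x\<rfloor>) \<ge> x - 1" by linarith+
qed

lemma core:
  fixes F :: "'a graph" and G :: "'b graph"
  assumes wfF: "wf_graph F" and wfG: "wf_graph G" and hFG: "hom F G \<ge> 1" and q: "q \<in> Qset G"
    and c: "\<forall>T::nat graph. wf_graph T \<longrightarrow> real (hom F T) \<ge> real (hom G T) powr c"
  shows "c \<le> (MAX \<phi>\<in>Homs F G. \<Sum>A\<in>Pow (verts G). q A * real (CC (induced F {v \<in> verts F. \<phi> v \<in> A})))"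
    (is "_ \<le> ?M")
proof (rule ccontr)
  assume "\<not> c \<le> ?M"
  then have cM: "c > ?M" by simp
  let ?V = "verts G"
  let ?H = "Homs F G"
  define val where "val \<phi> = (\<Sum>A\<in>Pow ?V. q A * real (CC (induced F {v \<in> verts F. \<phi> v \<in> A})))" for \<phi>
  have M_def: "?M = Max (val ` ?H)" unfolding val_def by simp
  have finH: "finite ?H" by (rule finite_Homs[OF wfF wfG])
  have neH: "?H \<noteq> {}" using hom_pos_iff[OF wfF wfG] hFG by blast
  have qnn: "\<And>A. A \<in> Pow ?V \<Longrightarrow> q A \<ge> 0" using q unfolding Qset_def by auto
  have qsum: "(\<Sum>A\<in>Pow ?V. q A * real (CC (induced G A))) = 1" using q unfolding Qset_def by auto
  have finV: "finite ?V" using wfG by (simp add: wf_graph_def)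
  have valM: "\<And>\<phi>. \<phi> \<in> ?H \<Longrightarrow> val \<phi> \<le> ?M" unfolding M_def using finH by simp
  obtain \<phi>0 where \<phi>0: "\<phi>0 \<in> ?H" using neH by blast
  have "val \<phi>0 \<ge> 0" unfolding val_def using qnn by (intro sum_nonneg) simp
  then have M0: "?M \<ge> 0" using valM[OF \<phi>0] by linarith
  then have cpos: "c > 0" using cM by linarith
  define D where "D = (\<Sum>A\<in>Pow ?V. real (CC (induced G A)))"
  define L where "L = log 2 (real (card ?H))"
  obtain k :: nat where k: "(L + c * D) / (c - ?M) < real k" using reals_Archimedean2 by blast
  define m where "m A = nat \<lfloor>real k * q A\<rfloor>" for A
  define n where "n A = (2::nat) ^ m A" for A
  have npos: "\<And>A. n A > 0" unfolding n_def by simp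
  define T where "T = blow G n"
  have wfT: "wf_graph T" unfolding T_def by (rule wf_blow[of G n, OF wfG npos])
  obtain h :: "_ \<Rightarrow> nat" and N where hN: "h ` verts T = {i. i < N}" "inj_on h (verts T)"
    using finite_imp_inj_to_nat_seg[of "verts T"] wfT unfolding wf_graph_def by blast
  have cT: "real (hom F T) \<ge> real (hom G T) powr c"
  proof -
    have "real (hom F (relab h T)) \<ge> real (hom G (relab h T)) powr c"
      using c wf_relab[OF wfT] by blast
    then show ?thesis using hom_relab[OF wfT hN(2) wfF] hom_relab[OF wfT hN(2) wfG] by simp
  qed
  define LG where "LG = (\<Sum>A\<in>Pow ?V. m A * CC (induced G A))"
  define LF where "LF \<phi> = (\<Sum>A\<in>Pow ?V. m A * CC (induced F {v \<in> verts F. \<phi> v \<in> A}))" for \<phi>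
  have prodG: "(\<Prod>A\<in>Pow ?V. n A ^ CC (induced G A)) = 2 ^ LG"
    unfolding LG_def n_def by (simp add: power_sum power_mult)
  have prodF: "(\<Prod>A\<in>Pow ?V. n A ^ CC (induced F {v \<in> verts F. \<phi> v \<in> A})) = 2 ^ LF \<phi>" for \<phi>
    unfolding LF_def n_def by (simp add: power_sum power_mult)
  have lowG: "(2::nat) ^ LG \<le> hom G T"
    using hom_blow_lower[of G n, OF wfG npos] prodG unfolding T_def by simp
  have upF: "hom F T \<le> (\<Sum>\<phi>\<in>?H. 2 ^ LF \<phi>)"
    using hom_blow_upper[of F G n, OF wfF wfG npos] prodF unfolding T_def by simp
  have mle: "real (m A) \<le> real k * q A" if "A \<in> Pow ?V" for A
    unfolding m_def using nat_floor_bounds(1) qnn[OF that] by simp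
  have mge: "real (m A) \<ge> real k * q A - 1" if "A \<in> Pow ?V" for A
    unfolding m_def using nat_floor_bounds(2) qnn[OF that] by simp
  have LFle: "real (LF \<phi>) \<le> real k * ?M" if "\<phi> \<in> ?H" for \<phi>
  proof -
    have "real (LF \<phi>) = (\<Sum>A\<in>Pow ?V. real (m A) * real (CC (induced F {v \<in> verts F. \<phi> v \<in> A})))"
      unfolding LF_def by simp
    also have "\<dots> \<le> (\<Sum>A\<in>Pow ?V. (real k * q A) * real (CC (induced F {v \<in> verts F. \<phi> v \<in> A})))"
      by (intro sum_mono mult_right_mono mle) auto
    also have "\<dots> = real k * val \<phi>" unfolding val_def by (simp add: sum_distrib_left mult.assoc)
    also have "\<dots> \<le> real k * ?M" using valM[OF that] by (simp add: mult_left_mono)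
    finally show ?thesis .
  qed
  have LGge: "real LG \<ge> real k - D"
  proof -
    have "real k - D = (\<Sum>A\<in>Pow ?V. (real k * q A - 1) * real (CC (induced G A)))"
    proof -
      have "(\<Sum>A\<in>Pow ?V. real k * (q A * real (CC (induced G A)))) = real k"
        using qsum by (simp add: sum_distrib_left[symmetric])
      then show ?thesis unfolding D_def by (simp add: left_diff_distrib sum_subtractf mult.assoc)
    qed
    also have "\<dots> \<le> (\<Sum>A\<in>Pow ?V. real (m A) * real (CC (induced G A)))"
      by (intro sum_mono mult_right_mono mge) auto
    also have "\<dots> = real LG" unfolding LG_def by simp
    finally show ?thesis .
  qed
  have chain1: "2 powr (c * (real k - D)) \<le> real (hom G T) powr c"
  proof -
    have "2 powr (c * (real k - D)) \<le> 2 powr (c * real LG)"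
      using LGge cpos by (intro powr_mono) (auto intro: mult_left_mono)
    also have "\<dots> = (2 powr real LG) powr c" by (simp add: powr_powr mult.commute)
    also have "\<dots> = (real (2 ^ LG)) powr c" by (simp add: powr_realpow)
    also have "\<dots> \<le> real (hom G T) powr c"
      using lowG cpos by (intro powr_mono2) (auto simp: of_nat_le_iff[symmetric] simp del: of_nat_le_iff)
    finally show ?thesis .
  qed
  have chain2: "real (hom F T) \<le> real (card ?H) * 2 powr (real k * ?M)"
  proof -
    have "real (hom F T) \<le> real (\<Sum>\<phi>\<in>?H. 2 ^ LF \<phi>)" using upF by linarith
    also have "\<dots> = (\<Sum>\<phi>\<in>?H. 2 powr real (LF \<phi>))" by (simp add: powr_realpow)
    also have "\<dots> \<le> (\<Sum>\<phi>\<in>?H. 2 powr (real k * ?M))"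
      by (intro sum_mono powr_mono LFle) auto
    also have "\<dots> = real (card ?H) * 2 powr (real k * ?M)" by simp
    finally show ?thesis .
  qed
  have "2 powr (c * (real k - D)) \<le> real (card ?H) * 2 powr (real k * ?M)"
    using chain1 cT chain2 by linarith
  then have "log 2 (2 powr (c * (real k - D))) \<le> log 2 (real (card ?H) * 2 powr (real k * ?M))"
    by (intro log_mono) auto
  moreover have "log 2 (real (card ?H) * 2 powr (real k * ?M)) = L + real k * ?M"
    unfolding L_def using finH neH by (simp add: log_mult card_gt_0_iff)
  ultimately have "c * (real k - D) \<le> L + real k * ?M" by simp
  then have "real k * (c - ?M) \<le> L + c * D" by (simp add: algebra_simps)
  moreover have "L + c * D < real k * (c - ?M)"
    using k cM by (simp add: divide_less_eq mult.commute)
  ultimately show False by linarith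
qed

theorem theorem3p2:
  fixes F :: "'a graph" and G :: "'b graph"
  assumes "wf_graph F" and "wf_graph G" and "hom F G \<ge> 1"
  shows "HDE F G \<le>
    (INF q \<in> Qset G. MAX \<phi> \<in> Homs F G.
       \<Sum>A \<in> Pow (verts G). q A * real (CC (induced F {v \<in> verts F. \<phi> v \<in> A})))"
proof (rule cINF_greatest)
  show "Qset G \<noteq> {}" by (rule Qset_ne[OF assms(2)])
  fix q assume q: "q \<in> Qset G"
  let ?S = "{c :: real. \<forall>T :: nat graph. wf_graph T \<longrightarrow> real (hom F T) \<ge> real (hom G T) powr c}"
  have "0 \<in> ?S"
  proof (intro CollectI allI impI)
    fix T :: "nat graph" assume wfT: "wf_graph T"
    show "real (hom F T) \<ge> real (hom G T) powr 0"
    proof (cases "hom G T = 0")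
      case True then show ?thesis by simp
    next
      case False
      then have "hom G T \<ge> 1" by simp
      then have "hom F T \<ge> 1" using hom_comp_pos[OF assms(1,2) wfT assms(3)] by blast
      then show ?thesis using False by simp
    qed
  qed
  then have ne: "?S \<noteq> {}" by blast
  show "HDE F G \<le> (MAX \<phi> \<in> Homs F G.
       \<Sum>A \<in> Pow (verts G). q A * real (CC (induced F {v \<in> verts F. \<phi> v \<in> A})))"
    unfolding HDE_def
  proof (rule cSup_least[OF ne])
    fix c assume "c \<in> ?S"
    then show "c \<le> (MAX \<phi> \<in> Homs F G.
       \<Sum>A \<in> Pow (verts G). q A * real (CC (induced F {v \<in> verts F. \<phi> v \<in> A})))"
      using core[OF assms q] by blast
  qed
qed

end
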